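(* Let $B\ge1$, $G=\{0,\frac1B,\dots,1\}$, $t\in G$ and $\eta\in(0,t)$. For each $r<0$ there exists $f^*\in\mathcal F_{r,\eta}$ with $\mathcal T_t(f^* )=\sup_{f\in\mathcal F_{r,\eta}}\mathcal T_t(f)$.
   Context: Identify a probability mass function $f$ on $G$ with $(f_0,\dots,f_B)$, $f_i=f(i/B)$; let $\mathcal T_t(f)=\sum_{i\ge Bt}f_i$ and $\mathcal E(f)=\sum_{i=1}^B\frac iBf_i$. For $r<0$, $a,b\ge0$, $\lambda\in(0,1)$, let $M_r(a,b;\lambda)=\{(1-\lambda)a^r+\lambda b^r\}^{1/r}$ if $ab>0$ and $0$ if $ab=0$. A non-negative function $g$ on an interval is $r$-concave if $g((1-\lambda)x+\lambda y)\ge M_r(g(x),g(y);\lambda)$ for all $x,y$, $\lambda\in(0,1)$ (for $r<0$ this is equivalent to $g^r$ being convex, with $0^r=\infty$). A probability mass function $f$ on $G$ is $r$-concave if the linear interpolant to $\{(i,f_i):i=0,\dots,B\}$ is $r$-concave on $[0,B]$. $\mathcal F_r$ denotes the set of $r$-concave probability mass functions on $G$ and $\mathcal F_{r,\eta}=\{f\in\mathcal F_r:\mathcal E(f)\le\eta\}$. *)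

theory Defs
  imports Complex_Main
begin

definition grid :: "nat \<Rightarrow> real set" where
  "grid B = {real i / real B | i. i \<le> B}"

text \<open>A probability mass function on G, identified with (f 0, ..., f B);
  values beyond B are fixed to 0 so that f is determined by the vector.\<close>
definition is_pmf :: "nat \<Rightarrow> (nat \<Rightarrow> real) \<Rightarrow> bool" where
  "is_pmf B f \<longleftrightarrow> (\<forall>i\<le>B. 0 \<le> f i) \<and> (\<Sum>i\<le>B. f i) = 1 \<and> (\<forall>i>B. f i = 0)"

definition tail :: "nat \<Rightarrow> real \<Rightarrow> (nat \<Rightarrow> real) \<Rightarrow> real" where
  "tail B t f = (\<Sum>i\<in>{i. i \<le> B \<and> real B * t \<le> real i}. f i)"

definition mean :: "nat \<Rightarrow> (nat \<Rightarrow> real) \<Rightarrow> real" where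
  "mean B f = (\<Sum>i=1..B. (real i / real B) * f i)"

definition Mr :: "real \<Rightarrow> real \<Rightarrow> real \<Rightarrow> real \<Rightarrow> real" where
  "Mr r a b l = (if a * b > 0 then ((1 - l) * a powr r + l * b powr r) powr (1 / r) else 0)"

definition r_concave_on :: "real \<Rightarrow> real set \<Rightarrow> (real \<Rightarrow> real) \<Rightarrow> bool" where
  "r_concave_on r S g \<longleftrightarrow> (\<forall>x\<in>S. 0 \<le> g x) \<and>
     (\<forall>x\<in>S. \<forall>y\<in>S. \<forall>l. 0 < l \<and> l < 1 \<longrightarrow> Mr r (g x) (g y) l \<le> g ((1 - l) * x + l * y))"

text \<open>Linear interpolant of the points (i, f i), i = 0..B, evaluated on [0,B].\<close>
definition interp :: "(nat \<Rightarrow> real) \<Rightarrow> real \<Rightarrow> real" where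
  "interp f x = (let k = nat \<lfloor>x\<rfloor> in (1 - (x - real k)) * f k + (x - real k) * f (Suc k))"

definition Fr :: "nat \<Rightarrow> real \<Rightarrow> (nat \<Rightarrow> real) set" where
  "Fr B r = {f. is_pmf B f \<and> r_concave_on r {0..real B} (interp f)}"

definition Fr_eta :: "nat \<Rightarrow> real \<Rightarrow> real \<Rightarrow> (nat \<Rightarrow> real) set" where
  "Fr_eta B r \<eta> = {f \<in> Fr B r. mean B f \<le> \<eta>}"

end

theory Submission imports Defs "HOL-Analysis.Analysis" begin

lemma powr_convex_neg:
  assumes "p \<le> 0" shows "convex_on {0<..} (\<lambda>x::real. x powr p)"
proof (rule convex_on_realI)
  show "\<And>x. x \<in> {0<..} \<Longrightarrow> ((\<lambda>x. x powr p) has_real_derivative p * x powr (p - 1)) (at x)"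
    by (rule has_real_derivative_powr) simp
  fix x y :: real assume "x \<in> {0<..}" "y \<in> {0<..}" "x \<le> y"
  then have "y powr (p-1) \<le> x powr (p-1)" using assms by (intro powr_mono2') auto
  then show "p * x powr (p - 1) \<le> p * y powr (p - 1)" using assms by (simp add: mult_left_mono_neg)
qed auto

lemma Mr_le_am:
  assumes "r < 0" "a > 0" "b > 0" "0 < l" "l < 1"
  shows "Mr r a b l \<le> (1 - l) * a + l * b"
proof -
  have c: "convex_on {0<..} (\<lambda>x::real. x powr (1/r))"
    by (rule powr_convex_neg) (use assms in \<open>simp add: divide_simps\<close>)
  have "((1 - l) * a powr r + l * b powr r) powr (1/r) \<le> (1-l) * (a powr r) powr (1/r) + l * (b powr r) powr (1/r)"
    using convex_onD[OF c, of l "a powr r" "b powr r"] assms by (simp add: algebra_simps)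
  also have "\<dots> = (1 - l) * a + l * b" using assms by (simp add: powr_powr)
  finally show ?thesis using assms by (simp add: Mr_def)
qed

definition delta :: "nat \<Rightarrow> real" where "delta i = (if i = 0 then 1 else 0)"

lemma interp_delta:
  assumes "0 \<le> x" shows "interp delta x = (if x < 1 then 1 - x else 0)"
proof (cases "x < 1")
  case True
  then have "nat \<lfloor>x\<rfloor> = 0" using assms by linarith
  then show ?thesis using True by (simp add: interp_def delta_def)
next
  case False
  then have "nat \<lfloor>x\<rfloor> \<ge> 1" by linarith
  then show ?thesis using False by (simp add: interp_def delta_def Let_def)
qed

lemma delta_in:
  assumes "B \<ge> 1" "0 < \<eta>" "r < 0"
  shows "delta \<in> Fr_eta B r \<eta>"
proof -
  have pmf: "is_pmf B delta"
    unfolding is_pmf_def delta_def by (simp add: sum.delta)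
  have mean: "mean B delta = 0" unfolding mean_def delta_def by simp
  have rc: "r_concave_on r {0..real B} (interp delta)"
    unfolding r_concave_on_def
  proof (intro conjI ballI allI impI)
    fix x assume "x \<in> {0..real B}" then show "0 \<le> interp delta x"
      by (simp add: interp_delta)
  next
    fix x y l :: real assume x: "x \<in> {0..real B}" and y: "y \<in> {0..real B}" and l: "0 < l \<and> l < 1"
    show "Mr r (interp delta x) (interp delta y) l \<le> interp delta ((1 - l) * x + l * y)"
    proof (cases "x < 1 \<and> y < 1")
      case True
      have z0: "0 \<le> (1 - l) * x + l * y" using x y l by simp
      have z1: "(1 - l) * x + l * y < 1"
      proof -
        have "(1 - l) * x + l * y < (1 - l) * 1 + l * 1"
          using True l by (intro add_less_le_mono mult_strict_left_mono mult_left_mono) auto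
        then show ?thesis by simp
      qed
      have "Mr r (1 - x) (1 - y) l \<le> (1 - l) * (1 - x) + l * (1 - y)"
        using True l \<open>r < 0\<close> by (intro Mr_le_am) auto
      then show ?thesis using True x y z0 z1 by (simp add: interp_delta algebra_simps)
    next
      case False
      then have "interp delta x * interp delta y = 0" using x y by (auto simp: interp_delta)
      then have "Mr r (interp delta x) (interp delta y) l = 0" unfolding Mr_def by (metis less_irrefl)
      moreover have "0 \<le> interp delta ((1 - l) * x + l * y)"
        using x y l by (simp add: interp_delta)
      ultimately show ?thesis by simp
    qed
  qed
  show ?thesis using pmf mean rc assms unfolding Fr_eta_def Fr_def by simp
qed

lemma coord_tendsto:
  fixes x :: "nat \<Rightarrow> nat \<Rightarrow> real"
  assumes "x \<longlonglongrightarrow> l" shows "(\<lambda>n. x n i) \<longlonglongrightarrow> l i"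
proof -
  have "isCont (\<lambda>f::nat \<Rightarrow> real. f i) l"
    using continuous_on_product_coordinates[of i] continuous_on_eq_continuous_at[OF open_UNIV] by blast
  then show ?thesis using assms isCont_tendsto_compose by blast
qed

lemma Mr_limit:
  assumes a: "a \<longlonglongrightarrow> a0" and b: "b \<longlonglongrightarrow> b0" and c: "c \<longlonglongrightarrow> c0"
    and nn: "\<And>n. 0 \<le> a n" "\<And>n. 0 \<le> b n" "\<And>n. 0 \<le> c n"
    and le: "\<And>n. Mr r (a n) (b n) l \<le> c n" and l: "0 < l" "l < 1"
  shows "Mr r a0 b0 l \<le> c0"
proof -
  have a0: "a0 \<ge> 0" using a nn(1) by (intro LIMSEQ_le_const) auto
  have b0: "b0 \<ge> 0" using b nn(2) by (intro LIMSEQ_le_const) auto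
  have c0: "c0 \<ge> 0" using c nn(3) by (intro LIMSEQ_le_const) auto
  show ?thesis
  proof (cases "a0 * b0 > 0")
    case False then show ?thesis using c0 by (simp add: Mr_def)
  next
    case True
    then have ap: "a0 > 0" and bp: "b0 > 0" using a0 b0
      by (metis less_eq_real_def mult_zero_left mult_zero_right less_irrefl)+
    have ev: "eventually (\<lambda>n. a n > 0 \<and> b n > 0) sequentially"
      using order_tendstoD(1)[OF a ap] order_tendstoD(1)[OF b bp] by (simp add: eventually_conj)
    have pos0: "(1 - l) * a0 powr r + l * b0 powr r > 0"
      using ap bp l by (intro add_pos_pos mult_pos_pos) auto
    have lim: "(\<lambda>n. ((1 - l) * a n powr r + l * b n powr r) powr (1/r))
        \<longlonglongrightarrow> ((1 - l) * a0 powr r + l * b0 powr r) powr (1/r)"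
      using pos0 ap bp by (intro tendsto_powr tendsto_intros a b) auto
    have "eventually (\<lambda>n. ((1 - l) * a n powr r + l * b n powr r) powr (1/r) \<le> c n) sequentially"
      using ev
    proof eventually_elim
      case (elim n) then show ?case using le[of n] by (simp add: Mr_def)
    qed
    then have "((1 - l) * a0 powr r + l * b0 powr r) powr (1/r) \<le> c0"
      by (rule tendsto_le[OF trivial_limit_sequentially c lim])
    then show ?thesis using True by (simp add: Mr_def)
  qed
qed

lemma interp_tendsto:
  assumes "x \<longlonglongrightarrow> f" shows "(\<lambda>n. interp (x n) z) \<longlonglongrightarrow> interp f z"
  unfolding interp_def Let_def
  by (intro tendsto_intros coord_tendsto assms)

lemma closed_Fr_eta: "closed (Fr_eta B r \<eta>)"
  unfolding closed_sequential_limits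
proof (intro allI impI, elim conjE)
  fix x f assume mem: "\<forall>n. x n \<in> Fr_eta B r \<eta>" and lim: "x \<longlonglongrightarrow> f"
  have co: "\<And>i. (\<lambda>n. x n i) \<longlonglongrightarrow> f i" using lim by (rule coord_tendsto)
  have pm: "\<And>n. is_pmf B (x n)" and rc: "\<And>n. r_concave_on r {0..real B} (interp (x n))"
    and me: "\<And>n. mean B (x n) \<le> \<eta>"
    using mem by (auto simp: Fr_eta_def Fr_def)
  have "\<forall>i\<le>B. 0 \<le> f i"
  proof (intro allI impI)
    fix i assume "i \<le> B"
    then have "\<forall>n. 0 \<le> x n i" using pm by (simp add: is_pmf_def)
    then show "0 \<le> f i" using co[of i] by (intro LIMSEQ_le_const) auto
  qed
  moreover have "(\<Sum>i\<le>B. f i) = 1"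
  proof -
    have "(\<lambda>n. \<Sum>i\<le>B. x n i) \<longlonglongrightarrow> (\<Sum>i\<le>B. f i)" by (intro tendsto_sum co)
    moreover have "(\<lambda>n. \<Sum>i\<le>B. x n i) = (\<lambda>n. 1)" using pm by (simp add: is_pmf_def)
    ultimately show ?thesis using LIMSEQ_unique by auto
  qed
  moreover have "\<forall>i>B. f i = 0"
  proof (intro allI impI)
    fix i assume "i > B"
    then have "(\<lambda>n. x n i) = (\<lambda>n. 0)" using pm by (simp add: is_pmf_def)
    then show "f i = 0" using co[of i] LIMSEQ_unique by auto
  qed
  ultimately have "is_pmf B f" by (simp add: is_pmf_def)
  moreover have "mean B f \<le> \<eta>"
  proof -
    have "(\<lambda>n. mean B (x n)) \<longlonglongrightarrow> mean B f" unfolding mean_def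
      by (intro tendsto_intros co)
    then show ?thesis using me by (intro LIMSEQ_le_const2) auto
  qed
  moreover have "r_concave_on r {0..real B} (interp f)"
    unfolding r_concave_on_def
  proof (intro conjI ballI allI impI)
    fix z assume "z \<in> {0..real B}" then show "0 \<le> interp f z"
      using rc by (intro LIMSEQ_le_const[OF interp_tendsto[OF lim]]) (auto simp: r_concave_on_def)
  next
    fix z y l :: real assume z: "z \<in> {0..real B}" and y: "y \<in> {0..real B}" and l: "0 < l \<and> l < 1"
    have w: "(1 - l) * z + l * y \<in> {0..real B}"
    proof -
      have "(1 - l) * z + l * y \<le> (1 - l) * real B + l * real B"
        using z y l by (intro add_mono mult_left_mono) auto
      moreover have "(1 - l) * real B + l * real B = real B" by (simp add: algebra_simps)
      ultimately show ?thesis using z y l by simp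
    qed
    show "Mr r (interp f z) (interp f y) l \<le> interp f ((1 - l) * z + l * y)"
      apply (rule Mr_limit[OF interp_tendsto[OF lim] interp_tendsto[OF lim] interp_tendsto[OF lim]])
      using rc z y w l by (auto simp: r_concave_on_def)
  qed
  ultimately show "f \<in> Fr_eta B r \<eta>" by (simp add: Fr_eta_def Fr_def)
qed

definition Kbox :: "nat \<Rightarrow> (nat \<Rightarrow> real) set" where
  "Kbox B = Pi\<^sub>E UNIV (\<lambda>i. if i \<le> B then {0..1} else {0})"

lemma compact_Kbox: "compact (Kbox B)"
proof -
  have "compactin (product_topology (\<lambda>i. euclidean) UNIV) (Kbox B)"
    unfolding Kbox_def compactin_PiE by auto
  then show ?thesis by (simp add: euclidean_product_topology)
qed

lemma Fr_eta_sub: "Fr_eta B r \<eta> \<subseteq> Kbox B"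
proof
  fix f assume "f \<in> Fr_eta B r \<eta>"
  then have p: "is_pmf B f" by (simp add: Fr_eta_def Fr_def)
  have "f i \<le> 1" if "i \<le> B" for i
  proof -
    have "f i \<le> (\<Sum>j\<le>B. f j)" using p that
      by (intro member_le_sum) (auto simp: is_pmf_def)
    then show ?thesis using p by (simp add: is_pmf_def)
  qed
  then show "f \<in> Kbox B" using p by (auto simp: Kbox_def is_pmf_def)
qed

lemma cont_tail: "continuous_on UNIV (tail B t)"
  unfolding tail_def
  by (intro continuous_on_sum) simp

theorem lemma3:
  fixes B :: nat and t \<eta> r :: real
  assumes "B \<ge> 1" and "t \<in> grid B" and "0 < \<eta>" and "\<eta> < t" and "r < 0"
  shows "\<exists>f\<in>Fr_eta B r \<eta>. tail B t f = Sup (tail B t ` Fr_eta B r \<eta>)"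
proof -
  let ?S = "Fr_eta B r \<eta>"
  have "compact (Kbox B \<inter> ?S)" by (rule compact_Int_closed[OF compact_Kbox closed_Fr_eta])
  then have cS: "compact ?S" using Fr_eta_sub by (simp add: Int_absorb1)
  have cT: "compact (tail B t ` ?S)"
    by (rule compact_continuous_image[OF continuous_on_subset[OF cont_tail] cS]) simp
  have ne: "tail B t ` ?S \<noteq> {}" using delta_in[OF assms(1,3,5)] by auto
  obtain s where s: "s \<in> tail B t ` ?S" "\<forall>y\<in>tail B t ` ?S. y \<le> s"
    using compact_attains_sup[OF cT ne] by blast
  have "Sup (tail B t ` ?S) = s" using s by (intro cSup_eq_maximum) auto
  then show ?thesis using s(1) by auto
qed

end
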